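(* Let $k\ge 1$ and $1\le k^*\le k$ be integers. For $r\in\{1,2\}$, run the Reduce-By-Median-Counter algorithm (defined in the context) with parameters $k,k^*$ on a weighted stream $\sigma_r$ of weighted length $N_r$, producing summary $S_r$. Let $\sigma=\sigma_1\circ\sigma_2$ be the concatenated stream, $N=N_1+N_2$, and $f_i$ the frequency of item $i$ in $\sigma$. Apply the merge procedure: for each item $i$ assigned a counter $c_2(i)$ in $S_2$ (in any order), call Update$(i,c_2(i))$ on $S_1$. Let $C$ be the sum of the counter values of the resulting summary and $\hat f_i$ its output of Estimate$(i)$. Then for every $i\in[m]$, $$0\le f_i-\hat f_i\le\frac{N-C}{k^*},$$ and moreover for every integer $0\le j<k^*$, $$0\le f_i-\hat f_i\le\frac{N^{\mathrm{res}(j)}}{k^*-j},$$ where $N^{\mathrm{res}(j)}$ is computed for $\sigma$.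
   Context: A weighted stream over the universe $[m]=\{1,\dots,m\}$ is a sequence of updates $(i_t,\Delta_t)$ with $i_t\in[m]$ and real weights $\Delta_t>0$; its weighted length is $\sum_t\Delta_t$. The frequency of $i$ in a stream is the sum of $\Delta_t$ over updates with $i_t=i$. $N^{\mathrm{res}(j)}$ denotes the sum of the frequencies of all items except the $j$ items of largest frequency (ties broken arbitrarily). The Reduce-By-Median-Counter algorithm with integer parameters $k\ge 1$ and $1\le k^*\le k$ maintains a set $T\subseteq[m]$ of at most $k$ items, each $j\in T$ carrying a nonnegative real counter $c(j)$; initially $T=\emptyset$. Update$(i,\Delta)$: if $i\in T$, set $c(i)\gets c(i)+\Delta$; else if $|T|<k$, add $i$ to $T$ with $c(i)=\Delta$; else call DecrementCounters(), and afterwards, if $\Delta\ge c_{k^*}$, add $i$ to $T$ with $c(i)=\Delta-c_{k^*}$. DecrementCounters(): let $c_{k^*}$ be the $k^*$-th largest value, counting multiplicity, of the multiset $\{c(j): j\in T\}$; for every $j\in T$ set $c(j)\gets c(j)-c_{k^*}$, and remove $j$ from $T$ if now $c(j)\le 0$. Estimate$(i)$ returns $c(i)$ if $i\in T$ and $0$ otherwise. *)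

theory Defs
  imports Complex_Main "HOL-Library.Multiset"
begin

text \<open>A summary is a pair (T, c): the set T of monitored items and the counter
function c (only its values on T are meaningful).\<close>

type_synonym summary = "nat set \<times> (nat \<Rightarrow> real)"

type_synonym wstream = "(nat \<times> real) list"

definition empty_summary :: summary where
  "empty_summary = ({}, (\<lambda>_. 0))"

definition kth_largest :: "nat set \<Rightarrow> (nat \<Rightarrow> real) \<Rightarrow> nat \<Rightarrow> real" where
  "kth_largest T c ks = rev (sorted_list_of_multiset (image_mset c (mset_set T))) ! (ks - 1)"

definition decrement_counters :: "nat \<Rightarrow> summary \<Rightarrow> summary" where
  "decrement_counters ks S = (let (T, c) = S; ck = kth_largest T c ks in
      ({j \<in> T. c j - ck > 0}, (\<lambda>j. c j - ck)))"

definition rbmc_update :: "nat \<Rightarrow> nat \<Rightarrow> summary \<Rightarrow> nat \<times> real \<Rightarrow> summary" where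
  "rbmc_update k ks S u = (let (T, c) = S; (i, \<Delta>) = u in
     if i \<in> T then (T, c(i := c i + \<Delta>))
     else if card T < k then (insert i T, c(i := \<Delta>))
     else (let ck = kth_largest T c ks; (T', c') = decrement_counters ks (T, c) in
           if \<Delta> \<ge> ck then (insert i T', c'(i := \<Delta> - ck)) else (T', c')))"

definition rbmc_run :: "nat \<Rightarrow> nat \<Rightarrow> summary \<Rightarrow> wstream \<Rightarrow> summary" where
  "rbmc_run k ks S \<sigma> = foldl (rbmc_update k ks) S \<sigma>"

definition rbmc_estimate :: "summary \<Rightarrow> nat \<Rightarrow> real" where
  "rbmc_estimate S i = (if i \<in> fst S then snd S i else 0)"

definition counter_sum :: "summary \<Rightarrow> real" where
  "counter_sum S = (\<Sum>j\<in>fst S. snd S j)"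

definition rbmc_merge :: "nat \<Rightarrow> nat \<Rightarrow> summary \<Rightarrow> summary \<Rightarrow> nat list \<Rightarrow> summary" where
  "rbmc_merge k ks S1 S2 xs = foldl (rbmc_update k ks) S1 (map (\<lambda>i. (i, snd S2 i)) xs)"

definition valid_stream :: "nat \<Rightarrow> wstream \<Rightarrow> bool" where
  "valid_stream m \<sigma> \<longleftrightarrow> (\<forall>(i, \<Delta>) \<in> set \<sigma>. i \<in> {1..m} \<and> \<Delta> > 0)"

definition weighted_length :: "wstream \<Rightarrow> real" where
  "weighted_length \<sigma> = sum_list (map snd \<sigma>)"

definition freq :: "wstream \<Rightarrow> nat \<Rightarrow> real" where
  "freq \<sigma> i = sum_list (map snd (filter (\<lambda>u. fst u = i) \<sigma>))"

definition N_res :: "nat \<Rightarrow> wstream \<Rightarrow> nat \<Rightarrow> real" where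
  "N_res m \<sigma> j = sum_list (drop j (rev (sort (map (freq \<sigma>) [1..<m+1]))))"

end

theory Submission
  imports Defs
begin

lemma kth_facts:
  assumes fin: "finite T" and ks1: "1 \<le> ks" and ksT: "ks \<le> card T"
  shows "\<exists>t\<in>T. c t = kth_largest T c ks"
    and "ks \<le> card {t\<in>T. kth_largest T c ks \<le> c t}"
proof -
  define L where "L = rev (sorted_list_of_multiset (image_mset c (mset_set T)))"
  have len: "length L = card T" unfolding L_def by (metis length_rev mset_sorted_list_of_multiset size_image_mset size_mset size_mset_set)
  have ck: "kth_largest T c ks = L ! (ks - 1)" unfolding kth_largest_def L_def by simp
  have mem: "L ! (ks - 1) \<in> set L" using len ks1 ksT by simp
  have setL: "set L = c ` T" unfolding L_def using fin by simp
  show "\<exists>t\<in>T. c t = kth_largest T c ks" using mem setL ck by auto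
  have srt: "sorted (rev L)" unfolding L_def by simp
  have ge: "\<forall>v\<in>set (take ks L). L ! (ks - 1) \<le> v"
  proof
    fix v assume "v \<in> set (take ks L)"
    then obtain n where n: "n < length (take ks L)" "v = take ks L ! n" by (metis in_set_conv_nth)
    hence nl: "n < ks" "n < length L" by auto
    have "rev L ! (length L - 1 - (ks - 1)) \<le> rev L ! (length L - 1 - n)"
      using srt nl ks1 ksT len by (intro sorted_nth_mono) auto
    thus "L ! (ks - 1) \<le> v" using n nl ks1 ksT len by (simp add: rev_nth)
  qed
  have "ks = length (filter (\<lambda>v. L ! (ks - 1) \<le> v) (take ks L))"
    using ge ksT len by (simp add: filter_True)
  also have "\<dots> \<le> length (filter (\<lambda>v. L ! (ks - 1) \<le> v) L)"
    by (metis append_take_drop_id filter_append length_append le_add1)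
  also have "\<dots> = size (filter_mset (\<lambda>v. L ! (ks - 1) \<le> v) (mset L))"
    by (metis mset_filter size_mset)
  also have "mset L = image_mset c (mset_set T)" unfolding L_def by simp
  also have "size (filter_mset (\<lambda>v. L ! (ks - 1) \<le> v) (image_mset c (mset_set T)))
     = card {t\<in>T. L ! (ks - 1) \<le> c t}"
    using fin by (simp add: filter_mset_image_mset)
  finally show "ks \<le> card {t\<in>T. kth_largest T c ks \<le> c t}" using ck by simp
qed

definition rinv :: "nat \<Rightarrow> summary \<Rightarrow> bool" where
  "rinv k S \<longleftrightarrow> finite (fst S) \<and> card (fst S) \<le> k \<and> (\<forall>j\<in>fst S. 0 \<le> snd S j)"

lemma step:
  fixes T :: "nat set" and c :: "nat \<Rightarrow> real" and i :: nat and \<Delta> :: real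
  assumes inv: "rinv k (T, c)" and ks1: "1 \<le> ks" and ksk: "ks \<le> k" and d0: "0 \<le> \<Delta>"
  defines "S' \<equiv> rbmc_update k ks (T, c) (i, \<Delta>)"
  shows "rinv k S' \<and> (\<exists>d\<ge>0. real ks * d \<le> \<Delta> + counter_sum (T, c) - counter_sum S' \<and>
     (\<forall>x. rbmc_estimate (T, c) x + (if x = i then \<Delta> else 0) - d \<le> rbmc_estimate S' x \<and>
          rbmc_estimate S' x \<le> rbmc_estimate (T, c) x + (if x = i then \<Delta> else 0)))"
proof -
  have fin: "finite T" and cardT: "card T \<le> k" and cnn: "\<And>j. j \<in> T \<Longrightarrow> 0 \<le> c j"
    using inv by (auto simp: rinv_def)
  consider (a) "i \<in> T" | (b) "i \<notin> T" "card T < k" | (c) "i \<notin> T" "\<not> card T < k" by blast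
  then show ?thesis
  proof cases
    case a
    have S': "S' = (T, c(i := c i + \<Delta>))" using a by (simp add: S'_def rbmc_update_def)
    have cs: "counter_sum S' = counter_sum (T, c) + \<Delta>"
      using a fin by (simp add: S' counter_sum_def sum.remove)
    show ?thesis
      apply (rule conjI)
      using inv a d0 apply (auto simp: S' rinv_def)[1]
      apply (rule exI[of _ 0])
      using a cs by (auto simp: S' rbmc_estimate_def)
  next
    case b
    have S': "S' = (insert i T, c(i := \<Delta>))" using b by (simp add: S'_def rbmc_update_def)
    have "(\<Sum>j\<in>T. (c(i := \<Delta>)) j) = (\<Sum>j\<in>T. c j)" using b by (intro sum.cong) auto
    hence cs: "counter_sum S' = counter_sum (T, c) + \<Delta>"
      using b fin by (simp add: S' counter_sum_def)
    show ?thesis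
      apply (rule conjI)
      using inv b d0 fin apply (auto simp: S' rinv_def card_insert_if)[1]
      apply (rule exI[of _ 0])
      using b cs by (auto simp: S' rbmc_estimate_def)
  next
    case c
    define ck where "ck = kth_largest T c ks"
    have cardk: "card T = k" using c cardT by simp
    have ksT: "ks \<le> card T" using cardk ksk by simp
    obtain t where t: "t \<in> T" "c t = ck" using kth_facts(1)[OF fin ks1 ksT] ck_def by metis
    have ck0: "0 \<le> ck" using t cnn by metis
    have many: "ks \<le> card {t\<in>T. ck \<le> c t}" using kth_facts(2)[OF fin ks1 ksT] ck_def by simp
    define T' where "T' = {j \<in> T. c j - ck > 0}"
    define c' where "c' = (\<lambda>j. c j - ck)"
    have dec: "decrement_counters ks (T, c) = (T', c')"
      by (simp add: decrement_counters_def T'_def c'_def ck_def Let_def)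
    have S': "S' = (if \<Delta> \<ge> ck then (insert i T', c'(i := \<Delta> - ck)) else (T', c'))"
      using c dec by (simp add: S'_def rbmc_update_def ck_def[symmetric])
    have T'T: "T' \<subseteq> T" by (auto simp: T'_def)
    have finT': "finite T'" using fin T'T finite_subset by blast
    have iT': "i \<notin> T'" using c T'T by blast
    have tT': "t \<notin> T'" using t by (simp add: T'_def)
    have cardT': "card T' < k" using psubset_card_mono[OF fin, of T'] T'T t tT' cardk by blast
    have sumT': "(\<Sum>j\<in>T'. c' j) = (\<Sum>j\<in>T. if c j - ck > 0 then c j - ck else 0)"
      using fin by (simp add: T'_def c'_def sum.inter_filter)
    have e1: "(\<Sum>j\<in>T. c j) - (\<Sum>j\<in>T'. c' j) = (\<Sum>j\<in>T. min (c j) ck)"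
      unfolding sumT' sum_subtractf[symmetric] by (intro sum.cong) auto
    have e2: "(\<Sum>j\<in>{t\<in>T. ck \<le> c t}. min (c j) ck) \<le> (\<Sum>j\<in>T. min (c j) ck)"
      using fin cnn ck0 by (intro sum_mono2) auto
    have e3: "(\<Sum>j\<in>{t\<in>T. ck \<le> c t}. min (c j) ck) = real (card {t\<in>T. ck \<le> c t}) * ck"
      by simp
    have e4: "real ks * ck \<le> real (card {t\<in>T. ck \<le> c t}) * ck" using many ck0 by (intro mult_right_mono) auto
    have loss: "real ks * ck \<le> (\<Sum>j\<in>T. c j) - (\<Sum>j\<in>T'. c' j)" using e1 e2 e3 e4 by linarith
    have sumT'2: "(\<Sum>j\<in>T'. (c'(i := \<Delta> - ck)) j) = (\<Sum>j\<in>T'. c' j)"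
      using iT' by (intro sum.cong) auto
    have cs: "counter_sum S' = (\<Sum>j\<in>T'. c' j) + (if \<Delta> \<ge> ck then \<Delta> - ck else 0)"
      using finT' iT' sumT'2 by (simp add: S' counter_sum_def)
    show ?thesis
    proof (rule conjI)
      show "rinv k S'" using finT' cardT' ck0 by (auto simp: S' rinv_def card_insert_if T'_def c'_def)
      show "\<exists>d\<ge>0. real ks * d \<le> \<Delta> + counter_sum (T, c) - counter_sum S' \<and>
     (\<forall>x. rbmc_estimate (T, c) x + (if x = i then \<Delta> else 0) - d \<le> rbmc_estimate S' x \<and>
          rbmc_estimate S' x \<le> rbmc_estimate (T, c) x + (if x = i then \<Delta> else 0))"
      proof (intro exI[of _ ck] conjI allI ck0)
        show "real ks * ck \<le> \<Delta> + counter_sum (T, c) - counter_sum S'"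
          using loss cs d0 ck0 by (simp add: counter_sum_def)
        fix x
        show "rbmc_estimate (T, c) x + (if x = i then \<Delta> else 0) - ck \<le> rbmc_estimate S' x"
          using c ck0 T'T by (auto simp: S' rbmc_estimate_def T'_def c'_def)
        show "rbmc_estimate S' x \<le> rbmc_estimate (T, c) x + (if x = i then \<Delta> else 0)"
          using c ck0 T'T cnn d0 by (auto simp: S' rbmc_estimate_def T'_def c'_def)
      qed
    qed
  qed
qed

lemma freq_Cons: "freq (u # \<sigma>) x = (if fst u = x then snd u else 0) + freq \<sigma> x"
  by (simp add: freq_def)

lemma freq_Nil: "freq [] x = 0" by (simp add: freq_def)

lemma wl_Cons: "weighted_length (u # \<sigma>) = snd u + weighted_length \<sigma>"
  by (simp add: weighted_length_def)

lemma freq_append: "freq (a @ b) x = freq a x + freq b x"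
  by (simp add: freq_def)

lemma run:
  assumes "rinv k S" and ks1: "1 \<le> ks" and ksk: "ks \<le> k" and "\<forall>u\<in>set \<sigma>. 0 \<le> snd u"
  shows "rinv k (foldl (rbmc_update k ks) S \<sigma>) \<and> (\<exists>D\<ge>0.
     real ks * D \<le> weighted_length \<sigma> + counter_sum S - counter_sum (foldl (rbmc_update k ks) S \<sigma>) \<and>
     (\<forall>x. rbmc_estimate S x + freq \<sigma> x - D \<le> rbmc_estimate (foldl (rbmc_update k ks) S \<sigma>) x \<and>
          rbmc_estimate (foldl (rbmc_update k ks) S \<sigma>) x \<le> rbmc_estimate S x + freq \<sigma> x))"
  using assms(1,4)
proof (induction \<sigma> arbitrary: S)
  case Nil
  then show ?case by (auto simp: freq_Nil weighted_length_def intro!: exI[of _ 0])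
next
  case (Cons u \<sigma>)
  obtain T c where S: "S = (T, c)" by (cases S)
  obtain i \<Delta> where u: "u = (i, \<Delta>)" by (cases u)
  have d0: "0 \<le> \<Delta>" using Cons.prems u by auto
  define S1 where "S1 = rbmc_update k ks S u"
  from step[of k T c ks \<Delta> i, OF _ ks1 ksk d0] Cons.prems(1)
  obtain d where inv1: "rinv k S1" and d: "d \<ge> 0" "real ks * d \<le> \<Delta> + counter_sum S - counter_sum S1"
     and e1: "\<And>x. rbmc_estimate S x + (if x = i then \<Delta> else 0) - d \<le> rbmc_estimate S1 x"
     and e2: "\<And>x. rbmc_estimate S1 x \<le> rbmc_estimate S x + (if x = i then \<Delta> else 0)"
    unfolding S1_def S u by blast
  have IH: "rinv k (foldl (rbmc_update k ks) S1 \<sigma>) \<and> (\<exists>D\<ge>0.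
     real ks * D \<le> weighted_length \<sigma> + counter_sum S1 - counter_sum (foldl (rbmc_update k ks) S1 \<sigma>) \<and>
     (\<forall>x. rbmc_estimate S1 x + freq \<sigma> x - D \<le> rbmc_estimate (foldl (rbmc_update k ks) S1 \<sigma>) x \<and>
          rbmc_estimate (foldl (rbmc_update k ks) S1 \<sigma>) x \<le> rbmc_estimate S1 x + freq \<sigma> x))"
    using Cons.IH[OF inv1] Cons.prems(2) by auto
  then obtain D where D: "D \<ge> 0" "real ks * D \<le> weighted_length \<sigma> + counter_sum S1 - counter_sum (foldl (rbmc_update k ks) S1 \<sigma>)"
    "\<And>x. rbmc_estimate S1 x + freq \<sigma> x - D \<le> rbmc_estimate (foldl (rbmc_update k ks) S1 \<sigma>) x"
    "\<And>x. rbmc_estimate (foldl (rbmc_update k ks) S1 \<sigma>) x \<le> rbmc_estimate S1 x + freq \<sigma> x" by blast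
  have fo: "foldl (rbmc_update k ks) S (u # \<sigma>) = foldl (rbmc_update k ks) S1 \<sigma>" by (simp add: S1_def)
  show ?case unfolding fo
  proof (intro conjI exI[of _ "d + D"] allI)
    show "rinv k (foldl (rbmc_update k ks) S1 \<sigma>)" using IH by blast
    show "0 \<le> d + D" using d D by simp
    show "real ks * (d + D) \<le> weighted_length (u # \<sigma>) + counter_sum S - counter_sum (foldl (rbmc_update k ks) S1 \<sigma>)"
      using d D by (simp add: wl_Cons u distrib_left)
    fix x
    show "rbmc_estimate S x + freq (u # \<sigma>) x - (d + D) \<le> rbmc_estimate (foldl (rbmc_update k ks) S1 \<sigma>) x"
      using e1[of x] D(3)[of x] by (auto simp: freq_Cons u)
    show "rbmc_estimate (foldl (rbmc_update k ks) S1 \<sigma>) x \<le> rbmc_estimate S x + freq (u # \<sigma>) x"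
      using e2[of x] D(4)[of x] by (auto simp: freq_Cons u)
  qed
qed

lemma top_bound:
  fixes L :: "real list" and D :: real
  assumes "0 \<le> D"
  shows "sum_list (take j (rev (sort L))) \<le> real j * D + sum_list (map (\<lambda>x. max 0 (x - D)) L)"
proof -
  define S where "S = rev (sort L)"
  define h where "h = (\<lambda>x::real. max 0 (x - D))"
  have "sum_list (take j S) \<le> sum_list (map (\<lambda>x. D + h x) (take j S))"
    using sum_list_mono[of "take j S" "\<lambda>x. x" "\<lambda>x. D + h x"] by (simp add: h_def)
  also have "\<dots> = real (length (take j S)) * D + sum_list (map h (take j S))"
    by (simp add: sum_list_addf sum_list_triv)
  also have "\<dots> \<le> real j * D + sum_list (map h (take j S))"
    using assms by (intro add_right_mono mult_right_mono) auto
  also have "sum_list (map h (take j S)) \<le> sum_list (map h S)"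
  proof -
    have "sum_list (map h S) = sum_list (map h (take j S)) + sum_list (map h (drop j S))"
      by (metis append_take_drop_id map_append sum_list_append)
    moreover have "0 \<le> sum_list (map h (drop j S))"
      by (rule sum_list_nonneg) (auto simp: h_def)
    ultimately show ?thesis by simp
  qed
  also have "sum_list (map h S) = sum_list (map h L)"
    unfolding S_def by (metis mset_map mset_rev mset_sort sum_mset_sum_list)
  finally show ?thesis unfolding S_def h_def by simp
qed

lemma freq_map:
  assumes "distinct xs"
  shows "freq (map (\<lambda>i. (i, g i)) xs) x = (if x \<in> set xs then g x else 0)"
  using assms by (induction xs) (auto simp: freq_Cons freq_Nil)

lemma wl_map:
  assumes "distinct xs"
  shows "weighted_length (map (\<lambda>i. (i, g i)) xs) = (\<Sum>i\<in>set xs. g i)"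
  using assms by (induction xs) (auto simp: wl_Cons weighted_length_def)

lemma sum_freq:
  assumes "valid_stream m \<sigma>"
  shows "sum_list (map (freq \<sigma>) [1..<m+1]) = weighted_length \<sigma>"
  using assms
proof (induction \<sigma>)
  case Nil
  then show ?case by (simp add: freq_Nil weighted_length_def)
next
  case (Cons u \<sigma>)
  obtain i \<Delta> where u: "u = (i, \<Delta>)" by (cases u)
  have v: "valid_stream m \<sigma>" using Cons.prems by (simp add: valid_stream_def)
  have im: "i \<in> {1..m}" using Cons.prems u by (simp add: valid_stream_def)
  define L where "L = [1..<m+1]"
  have Ls: "set L = {1..m}" "distinct L" by (auto simp: L_def)
  have "sum_list (map (freq (u # \<sigma>)) L) =
     sum_list (map (\<lambda>x. (if i = x then \<Delta> else 0) + freq \<sigma> x) L)"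
    by (intro arg_cong[where f=sum_list] map_cong) (simp_all add: freq_Cons u)
  also have "\<dots> = sum_list (map (\<lambda>x. if i = x then \<Delta> else 0) L) + sum_list (map (freq \<sigma>) L)"
    by (simp add: sum_list_addf)
  also have "sum_list (map (\<lambda>x. if i = x then \<Delta> else 0) L) = (\<Sum>x\<in>{1..m}. if i = x then \<Delta> else 0)"
    using Ls by (simp add: sum_list_distinct_conv_sum_set)
  also have "\<dots> = \<Delta>" using im by simp
  finally show ?case using Cons.IH[OF v] by (simp add: wl_Cons u L_def)
qed

lemma sum_est:
  assumes "rinv k S"
  shows "sum_list (map (rbmc_estimate S) [1..<m+1]) \<le> counter_sum S"
proof -
  obtain T c where S: "S = (T, c)" by (cases S)
  have fin: "finite T" and cnn: "\<And>j. j \<in> T \<Longrightarrow> 0 \<le> c j" using assms by (auto simp: S rinv_def)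
  define L where "L = [1..<m+1]"
  have Ls: "set L = {1..m}" "distinct L" by (auto simp: L_def)
  have "sum_list (map (rbmc_estimate S) L) = (\<Sum>x\<in>{1..m}. rbmc_estimate S x)"
    using Ls by (simp add: sum_list_distinct_conv_sum_set)
  also have "\<dots> = (\<Sum>x\<in>{1..m}. if x \<in> T then c x else 0)"
    unfolding S rbmc_estimate_def fst_conv snd_conv ..
  also have "\<dots> = (\<Sum>x\<in>{1..m} \<inter> T. c x)" by (simp add: sum.inter_restrict)
  also have "\<dots> \<le> (\<Sum>x\<in>T. c x)" using fin cnn by (intro sum_mono2) auto
  finally show ?thesis by (simp add: S counter_sum_def L_def)
qed

lemma N_res_eq:
  "N_res m \<sigma> j = sum_list (map (freq \<sigma>) [1..<m+1]) - sum_list (take j (rev (sort (map (freq \<sigma>) [1..<m+1]))))"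
proof -
  define L where "L = map (freq \<sigma>) [1..<m+1]"
  have "sum_list (rev (sort L)) = sum_list L" by (metis mset_rev mset_sort sum_mset_sum_list)
  moreover have "sum_list (rev (sort L)) = sum_list (take j (rev (sort L))) + sum_list (drop j (rev (sort L)))"
    by (metis append_take_drop_id sum_list_append)
  ultimately show ?thesis unfolding N_res_def L_def[symmetric] by simp
qed

theorem theorem9:
  fixes k ks m :: nat and \<sigma>1 \<sigma>2 :: wstream and xs :: "nat list"
  assumes "1 \<le> k" and "1 \<le> ks" and "ks \<le> k"
    and "valid_stream m \<sigma>1" and "valid_stream m \<sigma>2"
    and "distinct xs" and "set xs = fst (rbmc_run k ks empty_summary \<sigma>2)"
  shows "let S1 = rbmc_run k ks empty_summary \<sigma>1; S2 = rbmc_run k ks empty_summary \<sigma>2;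
             S = rbmc_merge k ks S1 S2 xs; \<sigma> = \<sigma>1 @ \<sigma>2;
             N = weighted_length \<sigma>1 + weighted_length \<sigma>2; C = counter_sum S in
         \<forall>i \<in> {1..m}.
           0 \<le> freq \<sigma> i - rbmc_estimate S i \<and>
           freq \<sigma> i - rbmc_estimate S i \<le> (N - C) / real ks \<and>
           (\<forall>j < ks. freq \<sigma> i - rbmc_estimate S i \<le> N_res m \<sigma> j / (real ks - real j))"
proof -
  note ks1 = assms(2) and ksk = assms(3)
  define S1 where "S1 = rbmc_run k ks empty_summary \<sigma>1"
  define S2 where "S2 = rbmc_run k ks empty_summary \<sigma>2"
  define \<mu> where "\<mu> = map (\<lambda>i. (i, snd S2 i)) xs"
  define S where "S = rbmc_merge k ks S1 S2 xs"
  define \<sigma> where "\<sigma> = \<sigma>1 @ \<sigma>2"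
  define N where "N = weighted_length \<sigma>1 + weighted_length \<sigma>2"
  define C where "C = counter_sum S"
  have inv0: "rinv k empty_summary" by (simp add: rinv_def empty_summary_def)
  have est0: "\<And>x. rbmc_estimate empty_summary x = 0" by (simp add: rbmc_estimate_def empty_summary_def)
  have cs0: "counter_sum empty_summary = 0" by (simp add: counter_sum_def empty_summary_def)
  have nn1: "\<forall>u\<in>set \<sigma>1. 0 \<le> snd u" using assms(4) unfolding valid_stream_def by fastforce
  have nn2: "\<forall>u\<in>set \<sigma>2. 0 \<le> snd u" using assms(5) unfolding valid_stream_def by fastforce
  obtain D1 where inv1: "rinv k S1" and D1: "D1 \<ge> 0" "real ks * D1 \<le> weighted_length \<sigma>1 - counter_sum S1"
    "\<And>x. freq \<sigma>1 x - D1 \<le> rbmc_estimate S1 x" "\<And>x. rbmc_estimate S1 x \<le> freq \<sigma>1 x"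
    using run[OF inv0 ks1 ksk nn1] unfolding S1_def rbmc_run_def est0 cs0 by auto
  obtain D2 where inv2: "rinv k S2" and D2: "D2 \<ge> 0" "real ks * D2 \<le> weighted_length \<sigma>2 - counter_sum S2"
    "\<And>x. freq \<sigma>2 x - D2 \<le> rbmc_estimate S2 x" "\<And>x. rbmc_estimate S2 x \<le> freq \<sigma>2 x"
    using run[OF inv0 ks1 ksk nn2] unfolding S2_def rbmc_run_def est0 cs0 by auto
  have xsT: "set xs = fst S2" using assms(7) S2_def by simp
  have nn3: "\<forall>u\<in>set \<mu>. 0 \<le> snd u" using inv2 xsT by (auto simp: \<mu>_def rinv_def)
  have fmu: "\<And>x. freq \<mu> x = rbmc_estimate S2 x"
    unfolding \<mu>_def using freq_map[OF assms(6)] xsT by (simp add: rbmc_estimate_def)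
  have wmu: "weighted_length \<mu> = counter_sum S2"
    unfolding \<mu>_def using wl_map[OF assms(6)] xsT by (simp add: counter_sum_def)
  have Sf: "S = foldl (rbmc_update k ks) S1 \<mu>" by (simp add: S_def rbmc_merge_def \<mu>_def)
  obtain D3 where inv3: "rinv k S" and D3: "D3 \<ge> 0" "real ks * D3 \<le> weighted_length \<mu> + counter_sum S1 - counter_sum S"
    "\<And>x. rbmc_estimate S1 x + freq \<mu> x - D3 \<le> rbmc_estimate S x" "\<And>x. rbmc_estimate S x \<le> rbmc_estimate S1 x + freq \<mu> x"
    using run[OF inv1 ks1 ksk nn3] unfolding Sf[symmetric] by blast
  define D where "D = D1 + D2 + D3"
  have D0: "0 \<le> D" using D1 D2 D3 by (simp add: D_def)
  have fs: "\<And>x. freq \<sigma> x = freq \<sigma>1 x + freq \<sigma>2 x" by (simp add: \<sigma>_def freq_append)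
  have lo: "\<And>x. freq \<sigma> x - D \<le> rbmc_estimate S x"
  proof -
    fix x show "freq \<sigma> x - D \<le> rbmc_estimate S x"
      using D1(3)[of x] D2(3)[of x] D3(3)[of x] fs[of x] fmu[of x] by (simp add: D_def)
  qed
  have hi: "\<And>x. rbmc_estimate S x \<le> freq \<sigma> x"
  proof -
    fix x show "rbmc_estimate S x \<le> freq \<sigma> x"
      using D1(4)[of x] D2(4)[of x] D3(4)[of x] fs[of x] fmu[of x] by simp
  qed
  have NC: "real ks * D \<le> N - C"
    using D1(2) D2(2) D3(2) wmu by (simp add: D_def N_def C_def distrib_left)
  have ksp: "0 < real ks" using ks1 by simp
  have DNC: "D \<le> (N - C) / real ks" using NC ksp by (simp add: field_simps)
  have vs: "valid_stream m \<sigma>" using assms(4,5) by (auto simp: valid_stream_def \<sigma>_def)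
  have sumf: "sum_list (map (freq \<sigma>) [1..<m+1]) = N"
    using sum_freq[OF vs] by (simp add: N_def \<sigma>_def weighted_length_def)
  have res: "\<And>j. j < ks \<Longrightarrow> D \<le> N_res m \<sigma> j / (real ks - real j)"
  proof -
    fix j assume j: "j < ks"
    define L where "L = map (freq \<sigma>) [1..<m+1]"
    have t: "sum_list (take j (rev (sort L))) \<le> real j * D + sum_list (map (\<lambda>x. max 0 (x - D)) L)"
      by (rule top_bound[OF D0])
    have "sum_list (map (\<lambda>x. max 0 (x - D)) L) \<le> sum_list (map (rbmc_estimate S) [1..<m+1])"
      unfolding L_def map_map o_def
      by (rule sum_list_mono) (use lo inv3 in \<open>auto simp: rinv_def rbmc_estimate_def\<close>)
    also have "\<dots> \<le> C" unfolding C_def by (rule sum_est[OF inv3])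
    finally have t2: "sum_list (map (\<lambda>x. max 0 (x - D)) L) \<le> C" .
    have nr: "N_res m \<sigma> j = N - sum_list (take j (rev (sort L)))"
      using N_res_eq[of m \<sigma> j] sumf by (simp add: L_def)
    have "(real ks - real j) * D \<le> N_res m \<sigma> j" using nr t t2 NC by (simp add: left_diff_distrib)
    moreover have "0 < real ks - real j" using j by simp
    ultimately show "D \<le> N_res m \<sigma> j / (real ks - real j)" by (simp add: field_simps)
  qed
  show ?thesis
    unfolding Let_def S1_def[symmetric] S2_def[symmetric] S_def[symmetric] \<sigma>_def[symmetric] N_def[symmetric] C_def[symmetric]
  proof (intro ballI conjI allI impI)
    fix i j
    show "0 \<le> freq \<sigma> i - rbmc_estimate S i" using hi[of i] by simp
    show "freq \<sigma> i - rbmc_estimate S i \<le> (N - C) / real ks" using lo[of i] DNC by simp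
    assume "j < ks"
    thus "freq \<sigma> i - rbmc_estimate S i \<le> N_res m \<sigma> j / (real ks - real j)" using lo[of i] res by force
  qed
qed
end
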